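(* Let $s$ be a non-empty string whose number $r$ of maximal runs is even. Then the only admissible bilateral run-peeling decomposition of $s$ that emits the minimum possible number of tokens is the one that, at every peeling step, takes $x=L$ and $y=R$ (i.e. peels both boundary runs completely, as Flashback does).
   Context: A maximal run of a string is a maximal block of consecutive equal symbols. An admissible bilateral run-peeling decomposition of a non-empty string $s$ is obtained by repeatedly applying the following rule to an active span (initially all of $s$) until it is consumed: (Termination) if the active span consists of a single run or of two adjacent runs, emit one terminal token for the span and stop; (Peeling step) otherwise, let $L$ be the length of the span's leading run (longest prefix of one repeated symbol) and $R$ the length of its trailing run (longest suffix of one repeated symbol), choose any integers $x\in\{1,\dots,L\}$ and $y\in\{1,\dots,R\}$, emit one token formed by the peeled prefix of length $x$ and the peeled suffix of length $y$, and continue with the remaining middle as the active span. *)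

theory Defs
  imports Main
begin

definition num_runs :: "'a list \<Rightarrow> nat" where
  "num_runs s = length (remdups_adj s)"

definition lead_run :: "'a list \<Rightarrow> nat" where
  "lead_run s = length (takeWhile (\<lambda>c. c = hd s) s)"

definition trail_run :: "'a list \<Rightarrow> nat" where
  "trail_run s = length (takeWhile (\<lambda>c. c = last s) (rev s))"

text \<open>Tokens: a terminal token for the final span, or a peeling token
  consisting of the peeled prefix and the peeled suffix.\<close>
datatype 'a token = Terminal "'a list" | Peel "'a list" "'a list"

text \<open>Admissible bilateral run-peeling decompositions: rpd s ts means the
  token sequence ts is emitted by some run of the procedure on the active span s.\<close>
inductive rpd :: "'a list \<Rightarrow> 'a token list \<Rightarrow> bool" where
  terminal: "s \<noteq> [] \<Longrightarrow> num_runs s \<le> 2 \<Longrightarrow> rpd s [Terminal s]"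
| peel: "num_runs s \<ge> 3 \<Longrightarrow> 1 \<le> x \<Longrightarrow> x \<le> lead_run s \<Longrightarrow>
         1 \<le> y \<Longrightarrow> y \<le> trail_run s \<Longrightarrow>
         rpd (drop x (take (length s - y) s)) ts \<Longrightarrow>
         rpd s (Peel (take x s) (drop (length s - y) s) # ts)"

inductive full_rpd :: "'a list \<Rightarrow> 'a token list \<Rightarrow> bool" where
  terminal: "s \<noteq> [] \<Longrightarrow> num_runs s \<le> 2 \<Longrightarrow> full_rpd s [Terminal s]"
| peel: "num_runs s \<ge> 3 \<Longrightarrow> x = lead_run s \<Longrightarrow> y = trail_run s \<Longrightarrow>
         full_rpd (drop x (take (length s - y) s)) ts \<Longrightarrow>
         full_rpd s (Peel (take x s) (drop (length s - y) s) # ts)"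

end

theory Submission
  imports Defs
begin

lemma nr_Nil: "num_runs [] = 0" by (simp add: num_runs_def)

lemma nr_Cons: "num_runs (a # ys) = (if ys \<noteq> [] \<and> hd ys = a then num_runs ys else Suc (num_runs ys))"
  by (cases ys) (auto simp: num_runs_def)

lemma nr_rep: "0 < k \<Longrightarrow> num_runs (replicate k a @ ys) = (if ys \<noteq> [] \<and> hd ys = a then num_runs ys else Suc (num_runs ys))"
proof (induction k)
  case 0 then show ?case by simp
next
  case (Suc k)
  then show ?case by (cases k) (auto simp: nr_Cons)
qed

lemma nr_rep0: "num_runs (replicate k a @ ys) = (if k = 0 then num_runs ys else if ys \<noteq> [] \<and> hd ys = a then num_runs ys else Suc (num_runs ys))"
  using nr_rep[of k a ys] by simp

lemma nr_rev: "num_runs (rev xs) = num_runs xs"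
  by (simp add: num_runs_def remdups_adj_rev)

lemma nr_rep_r0: "num_runs (ys @ replicate k b) = (if k = 0 then num_runs ys else if ys \<noteq> [] \<and> last ys = b then num_runs ys else Suc (num_runs ys))"
proof -
  have "num_runs (ys @ replicate k b) = num_runs (replicate k b @ rev ys)"
    by (metis nr_rev rev_append rev_replicate)
  then show ?thesis by (simp add: nr_rep0 nr_rev hd_rev)
qed

lemma nr_pos: "s \<noteq> [] \<Longrightarrow> num_runs s \<ge> 1"
  by (simp add: num_runs_def Suc_leI)

lemma lead_decomp:
  assumes "s \<noteq> []"
  shows "s = replicate (lead_run s) (hd s) @ dropWhile (\<lambda>c. c = hd s) s \<and> lead_run s \<ge> 1
     \<and> (dropWhile (\<lambda>c. c = hd s) s \<noteq> [] \<longrightarrow> hd (dropWhile (\<lambda>c. c = hd s) s) \<noteq> hd s)"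
proof -
  have r: "replicate (lead_run s) (hd s) = takeWhile (\<lambda>c. c = hd s) s"
    unfolding lead_run_def by (rule replicate_length_same) (auto dest: set_takeWhileD)
  have "lead_run s \<ge> 1" using assms unfolding lead_run_def by (cases s) auto
  moreover have "dropWhile (\<lambda>c. c = hd s) s \<noteq> [] \<longrightarrow> hd (dropWhile (\<lambda>c. c = hd s) s) \<noteq> hd s"
    using hd_dropWhile[of "\<lambda>c. c = hd s" s] by simp
  ultimately show ?thesis using r by simp
qed

lemma decomp:
  assumes "num_runs s \<ge> 3"
  shows "\<exists>m. s = replicate (lead_run s) (hd s) @ m @ replicate (trail_run s) (last s) \<and> m \<noteq> []
    \<and> hd m \<noteq> hd s \<and> last m \<noteq> last s \<and> 1 \<le> lead_run s \<and> 1 \<le> trail_run s \<and> num_runs s = num_runs m + 2"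
proof -
  have sne: "s \<noteq> []" using assms by (auto simp: nr_Nil)
  define a where "a = hd s"
  define t where "t = dropWhile (\<lambda>c. c = a) s"
  define L where "L = lead_run s"
  have s1: "s = replicate L a @ t" and L1: "L \<ge> 1" and ht: "t \<noteq> [] \<Longrightarrow> hd t \<noteq> a"
    using lead_decomp[OF sne] unfolding a_def t_def L_def by auto
  have tne: "t \<noteq> []"
  proof
    assume "t = []"
    then have "num_runs s = 1" using s1 L1 by (simp add: num_runs_def remdups_adj_replicate)
    then show False using assms by simp
  qed
  have rs: "num_runs s = Suc (num_runs t)" using s1 L1 tne ht by (simp add: nr_rep)
  define b where "b = last s"
  have bt: "b = last t" using s1 tne b_def by simp
  have rtne: "rev t \<noteq> []" using tne by simp
  have hrt: "hd (rev t) = b" using bt tne by (simp add: hd_rev)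
  define u where "u = dropWhile (\<lambda>c. c = b) (rev t)"
  define R where "R = lead_run (rev t)"
  have t1: "rev t = replicate R b @ u" and R1: "R \<ge> 1" and hu: "u \<noteq> [] \<Longrightarrow> hd u \<noteq> b"
    using lead_decomp[OF rtne] unfolding hrt u_def R_def by auto
  have une: "u \<noteq> []"
  proof
    assume "u = []"
    then have "t = replicate R b" using t1 by (metis append_Nil2 rev_replicate rev_rev_ident)
    then have "num_runs t = 1" using R1 by (simp add: num_runs_def remdups_adj_replicate)
    then show False using assms rs by simp
  qed
  define m where "m = rev u"
  have tm: "t = m @ replicate R b" using t1 m_def by (metis rev_append rev_replicate rev_rev_ident)
  have mne: "m \<noteq> []" using une m_def by simp
  have lm: "last m \<noteq> b" using hu une m_def by (simp add: last_rev)
  have hm: "hd m \<noteq> a" using ht tne tm mne by simp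
  have rt: "num_runs t = Suc (num_runs m)" using tm R1 mne lm by (simp add: nr_rep_r0)
  have Rtr: "trail_run s = R"
  proof -
    have "hd u \<in> set (rev t)" using t1 une by simp
    then have "takeWhile (\<lambda>c. c = b) (rev t @ rev (replicate L a)) = takeWhile (\<lambda>c. c = b) (rev t)"
      by (rule takeWhile_append1[of "hd u"]) (use hu une in auto)
    moreover have "rev s = rev t @ rev (replicate L a)" using s1 by simp
    ultimately show ?thesis unfolding trail_run_def R_def lead_run_def b_def[symmetric]
      using hrt by simp
  qed
  show ?thesis
    apply (rule exI[of _ m])
    using s1 tm mne hm lm L1 R1 Rtr rs rt unfolding a_def b_def L_def by auto
qed


lemma mid:
  assumes r3: "num_runs s \<ge> 3" and "1 \<le> x" "x \<le> lead_run s" "1 \<le> y" "y \<le> trail_run s"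
  shows "num_runs (drop x (take (length s - y) s)) + 2 = num_runs s
            + (if x < lead_run s then 1 else 0) + (if y < trail_run s then 1 else 0)"
    and "drop x (take (length s - y) s) \<noteq> []"
proof -
  obtain m where m: "s = replicate (lead_run s) (hd s) @ m @ replicate (trail_run s) (last s)" "m \<noteq> []"
    "hd m \<noteq> hd s" "last m \<noteq> last s" "num_runs s = num_runs m + 2"
    using decomp[OF r3] by blast
  define L where "L = lead_run s"
  define R where "R = trail_run s"
  define a where "a = hd s"
  define b where "b = last s"
  define M where "M = replicate (L-x) a @ m @ replicate (R-y) b"
  have eq: "s = replicate x a @ M @ replicate y b"
  proof -
    have "replicate L a = replicate x a @ replicate (L-x) a"
      using assms unfolding L_def by (metis le_add_diff_inverse replicate_add)
    moreover have "replicate R b = replicate (R-y) b @ replicate y b"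
      using assms unfolding R_def by (metis le_add_diff_inverse2 replicate_add)
    ultimately show ?thesis using m(1) unfolding M_def L_def R_def a_def b_def by simp
  qed
  have dm: "drop x (take (length s - y) s) = M"
    by (subst (1 2) eq) simp
  show "drop x (take (length s - y) s) \<noteq> []" using dm m(2) M_def by simp
  have "num_runs M = (if L - x = 0 then 0 else 1) + num_runs m + (if R - y = 0 then 0 else 1)"
    unfolding M_def using m(2,3,4) unfolding a_def[symmetric] b_def[symmetric]
    by (simp add: nr_rep0 nr_rep_r0)
  then show "num_runs (drop x (take (length s - y) s)) + 2 = num_runs s
            + (if x < lead_run s then 1 else 0) + (if y < trail_run s then 1 else 0)"
    using dm m(5) assms unfolding L_def R_def by auto
qed

lemma rpd_lower: "rpd s ts \<Longrightarrow> num_runs s \<le> 2 * length ts"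
proof (induction rule: rpd.induct)
  case (terminal s) then show ?case by simp
next
  case (peel s x y ts)
  from mid(1)[OF peel(1-5)] peel.IH show ?case by (auto split: if_splits)
qed

lemma rpd_tight: "rpd s ts \<Longrightarrow> even (num_runs s) \<Longrightarrow> num_runs s = 2 * length ts \<Longrightarrow> full_rpd s ts"
proof (induction rule: rpd.induct)
  case (terminal s) then show ?case by (simp add: full_rpd.terminal)
next
  case (peel s x y ts)
  have lo: "num_runs (drop x (take (length s - y) s)) \<le> 2 * length ts"
    using rpd_lower[OF peel(6)] .
  have e: "num_runs (drop x (take (length s - y) s)) + 2 = num_runs s
            + (if x < lead_run s then 1 else 0) + (if y < trail_run s then 1 else 0)"
    using mid(1)[OF peel(1-5)] .
  have xL: "x = lead_run s" and yR: "y = trail_run s"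
    using lo e peel.prems peel(3,5) by (auto split: if_splits)
  have "num_runs (drop x (take (length s - y) s)) = 2 * length ts"
    using lo e peel.prems xL yR by simp
  then have "full_rpd (drop x (take (length s - y) s)) ts"
    using peel.IH by simp
  then show ?case using full_rpd.peel[OF peel(1) xL yR] by simp
qed

lemma full_props: "full_rpd s ts \<Longrightarrow> rpd s ts \<and> (even (num_runs s) \<longrightarrow> num_runs s = 2 * length ts)"
proof (induction rule: full_rpd.induct)
  case (terminal s)
  have "num_runs s \<ge> 1" using nr_pos[OF terminal(1)] .
  then show ?case using terminal by (auto intro: rpd.terminal simp: le_Suc_eq)
next
  case (peel s x y ts)
  obtain m where m: "1 \<le> lead_run s" "1 \<le> trail_run s" using decomp[OF peel(1)] by blast
  have e: "num_runs (drop x (take (length s - y) s)) + 2 = num_runs s"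
    using mid(1)[of s x y] peel m by simp
  have "rpd s (Peel (take x s) (drop (length s - y) s) # ts)"
    using rpd.peel[of s x y] peel m by simp
  moreover have "even (num_runs s) \<longrightarrow> num_runs s = 2 * length (Peel (take x s) (drop (length s - y) s) # ts)"
  proof
    assume "even (num_runs s)"
    then have "even (num_runs (drop x (take (length s - y) s)))" using e by presburger
    then show "num_runs s = 2 * length (Peel (take x s) (drop (length s - y) s) # ts)"
      using peel.IH e by auto
  qed
  ultimately show ?case by blast
qed

lemma full_exists: "s \<noteq> [] \<Longrightarrow> \<exists>ts. full_rpd s ts"
proof (induction "length s" arbitrary: s rule: less_induct)
  case less
  show ?case
  proof (cases "num_runs s \<le> 2")
    case True then show ?thesis using less.prems full_rpd.terminal by blast
  next
    case False
    then have r3: "num_runs s \<ge> 3" by simp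
    obtain m where m: "1 \<le> lead_run s" "1 \<le> trail_run s" using decomp[OF r3] by blast
    have ne: "drop (lead_run s) (take (length s - trail_run s) s) \<noteq> []"
      using mid(2)[OF r3 m(1) order_refl m(2) order_refl] .
    have "length (drop (lead_run s) (take (length s - trail_run s) s)) < length s"
      using m ne by auto
    then obtain ts where "full_rpd (drop (lead_run s) (take (length s - trail_run s) s)) ts"
      using less.hyps ne by blast
    then show ?thesis using full_rpd.peel[OF r3 refl refl] by blast
  qed
qed

theorem corollary6p5:
  fixes s :: "'a list" and ts :: "'a token list"
  assumes "s \<noteq> []" and "even (num_runs s)" and "rpd s ts"
  shows "(\<forall>ts'. rpd s ts' \<longrightarrow> length ts \<le> length ts') \<longleftrightarrow> full_rpd s ts"
proof
  assume mn: "\<forall>ts'. rpd s ts' \<longrightarrow> length ts \<le> length ts'"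
  obtain ts0 where f0: "full_rpd s ts0" using full_exists[OF assms(1)] by blast
  have "rpd s ts0" and "num_runs s = 2 * length ts0" using full_props[OF f0] assms(2) by auto
  then have "num_runs s = 2 * length ts" using mn rpd_lower[OF assms(3)] by fastforce
  then show "full_rpd s ts" using rpd_tight[OF assms(3,2)] by simp
next
  assume f: "full_rpd s ts"
  then have "num_runs s = 2 * length ts" using full_props assms(2) by blast
  then show "\<forall>ts'. rpd s ts' \<longrightarrow> length ts \<le> length ts'" using rpd_lower by fastforce
qed

end
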